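(* Let $n\geq 5$, let $S$ be the set of all $3$-cycles in $S_n$, and let $CAG_n=\mathrm{Cay}(A_n,S)$. Let $A_e$ be the set of automorphisms of $CAG_n$ that fix the identity vertex $e$ and each of its neighbours. Then $A_e=\{1\}$.
   Context: For a finite group $\Gamma$ and a subset $T\subseteq\Gamma$ with $e\notin T$ and $T=T^{-1}$, the Cayley graph $\mathrm{Cay}(\Gamma,T)$ is the undirected graph with vertex set $\Gamma$ and edge set $\{\{\gamma,t\gamma\}\mid \gamma\in\Gamma, t\in T\}$. The neighbours of $e$ in $CAG_n$ are exactly the elements of $S$. *)

theory Defs
  imports "HOL-Combinatorics.Combinatorics"
begin

text \<open>Permutations of {0..<n} represented as functions nat => nat; group product is composition.\<close>

definition alt_grp :: "nat \<Rightarrow> (nat \<Rightarrow> nat) set" where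
  "alt_grp n = {p. p permutes {..<n} \<and> evenperm p}"

definition three_cycles :: "nat \<Rightarrow> (nat \<Rightarrow> nat) set" where
  "three_cycles n = {cycle_of_list [a, b, c] | a b c.
      distinct [a, b, c] \<and> a < n \<and> b < n \<and> c < n}"

definition cag_adj :: "nat \<Rightarrow> (nat \<Rightarrow> nat) \<Rightarrow> (nat \<Rightarrow> nat) \<Rightarrow> bool" where
  "cag_adj n x y \<longleftrightarrow> x \<in> alt_grp n \<and> y \<in> alt_grp n \<and>
     (\<exists>t\<in>three_cycles n. y = t \<circ> x \<or> x = t \<circ> y)"

definition cag_aut :: "nat \<Rightarrow> ((nat \<Rightarrow> nat) \<Rightarrow> (nat \<Rightarrow> nat)) \<Rightarrow> bool" where
  "cag_aut n f \<longleftrightarrow> bij_betw f (alt_grp n) (alt_grp n) \<and>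
     (\<forall>x\<in>alt_grp n. \<forall>y\<in>alt_grp n. cag_adj n x y \<longleftrightarrow> cag_adj n (f x) (f y))"

end

theory Submission
  imports Defs
begin


definition c3 :: "nat \<Rightarrow> nat \<Rightarrow> nat \<Rightarrow> nat \<Rightarrow> nat" where
  "c3 a b c = (\<lambda>i. if i = a then b else if i = b then c else if i = c then a else i)"

lemma cyc3: "distinct [a,b,c] \<Longrightarrow> cycle_of_list [a,b,c] = c3 a b c"
  by (auto simp: c3_def Transposition.transpose_def fun_eq_iff)

lemma c3_perm: "distinct [a,b,c] \<Longrightarrow> a < n \<Longrightarrow> b < n \<Longrightarrow> c < n \<Longrightarrow> c3 a b c permutes {..<n}"
  by (metis cyc3 cycle_permutes list.set(1,2) permutes_subset empty_subsetI insert_subset lessThan_iff)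

lemma c3_even: "distinct [a,b,c] \<Longrightarrow> evenperm (c3 a b c)"
proof -
  assume d: "distinct [a,b,c]"
  have "c3 a b c = transpose a b \<circ> transpose b c" using cyc3[OF d] by simp
  then show ?thesis using d by (simp add: evenperm_comp evenperm_swap permutation_swap_id)
qed

lemma c3_S: "distinct [a,b,c] \<Longrightarrow> a < n \<Longrightarrow> b < n \<Longrightarrow> c < n \<Longrightarrow> c3 a b c \<in> three_cycles n"
  unfolding three_cycles_def by (metis (mono_tags, lifting) cyc3 mem_Collect_eq)

lemma c3_A: "distinct [a,b,c] \<Longrightarrow> a < n \<Longrightarrow> b < n \<Longrightarrow> c < n \<Longrightarrow> c3 a b c \<in> alt_grp n"
  unfolding alt_grp_def using c3_perm c3_even by blast

lemma S_c3: "t \<in> three_cycles n \<Longrightarrow> \<exists>a b c. distinct [a,b,c] \<and> a < n \<and> b < n \<and> c < n \<and> t = c3 a b c"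
  unfolding three_cycles_def using cyc3 by blast

lemma S_A: "t \<in> three_cycles n \<Longrightarrow> t \<in> alt_grp n"
  using S_c3 c3_A by blast

definition hdist :: "(nat \<Rightarrow> nat) \<Rightarrow> (nat \<Rightarrow> nat) \<Rightarrow> nat" where
  "hdist x y = card {i. x i \<noteq> y i}"

lemma hd_sym: "hdist x y = hdist y x"
  unfolding hdist_def by (simp add: eq_commute)

lemma support3:
  assumes p: "p permutes U" and c: "card {i. p i \<noteq> i} = 3"
  shows "\<exists>a b c. distinct [a,b,c] \<and> p = c3 a b c \<and> {i. p i \<noteq> i} = {a,b,c}"
proof -
  obtain x y z where M: "{i. p i \<noteq> i} = {x,y,z}" and d: "x \<noteq> y" "x \<noteq> z" "y \<noteq> z"
    using c card_3_iff by metis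
  have inj: "p u = p v \<Longrightarrow> u = v" for u v using p by (metis permutes_inj injD)
  have inM: "p u \<noteq> u \<Longrightarrow> p u \<in> {x,y,z}" for u
  proof -
    assume "p u \<noteq> u"
    then have "p (p u) \<noteq> p u" using inj by metis
    then show ?thesis using M by blast
  qed
  have mx: "p x \<noteq> x" "p y \<noteq> y" "p z \<noteq> z" using M by auto
  have out: "u \<notin> {x,y,z} \<Longrightarrow> p u = u" for u using M by blast
  have pz: "p z \<in> {x,y,z}" "p y \<in> {x,y,z}" "p x \<in> {x,y,z}" using inM mx by auto
  show ?thesis
  proof (cases "p x = y")
    case True
    have "p y \<noteq> x"
    proof
      assume "p y = x"
      then show False using pz(1) mx(3) inj[of z x] inj[of z y] True d by auto
    qed
    then have py: "p y = z" using pz(2) mx(2) by auto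
    then have pz': "p z = x" using pz(1) mx(3) inj[of z x] True d by auto
    have "p = c3 x y z" using True py pz' out by (auto simp: c3_def fun_eq_iff)
    then show ?thesis using d M by auto
  next
    case False
    then have px: "p x = z" using pz(3) mx(1) by auto
    have "p z \<noteq> x"
    proof
      assume "p z = x"
      then show False using pz(2) mx(2) inj[of y x] inj[of y z] px d by auto
    qed
    then have pz': "p z = y" using pz(1) mx(3) by auto
    then have py: "p y = x" using pz(2) mx(2) inj[of y x] px d by auto
    have "p = c3 x z y" using px py pz' out by (auto simp: c3_def fun_eq_iff)
    then show ?thesis using d M by auto
  qed
qed

lemma A_perm: "x \<in> alt_grp n \<Longrightarrow> x permutes {..<n}" unfolding alt_grp_def by auto

lemma A_bij: "x \<in> alt_grp n \<Longrightarrow> bij x" using A_perm permutes_bij by blast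

lemma c3_moved: "distinct [a,b,c] \<Longrightarrow> {i. c3 a b c i \<noteq> i} = {a,b,c}"
  by (auto simp: c3_def)

lemma hd_left: assumes "bij x" shows "hdist (t \<circ> x) x = card {j. t j \<noteq> j}"
proof -
  have "{i. (t \<circ> x) i \<noteq> x i} = inv x ` {j. t j \<noteq> j}"
    using assms by (auto simp: bij_inv_eq_iff image_iff) (metis bij_inv_eq_iff)
  moreover have "inj (inv x)" using assms bij_imp_bij_inv bij_is_inj by blast
  ultimately show ?thesis unfolding hdist_def by (simp add: card_image inj_on_subset)
qed

lemma adj_iff: "cag_adj n x y \<longleftrightarrow> x \<in> alt_grp n \<and> y \<in> alt_grp n \<and> hdist x y = 3"
proof
  assume a: "cag_adj n x y"
  then obtain t where t: "t \<in> three_cycles n" "y = t \<circ> x \<or> x = t \<circ> y" and xy: "x \<in> alt_grp n" "y \<in> alt_grp n"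
    unfolding cag_adj_def by blast
  obtain a b c where abc: "distinct [a,b,c]" "t = c3 a b c" using S_c3[OF t(1)] by blast
  have ct: "card {j. t j \<noteq> j} = 3" using abc c3_moved by simp
  show "x \<in> alt_grp n \<and> y \<in> alt_grp n \<and> hdist x y = 3"
    using t(2) hd_left[OF A_bij[OF xy(1)], of t] hd_left[OF A_bij[OF xy(2)], of t] ct xy hd_sym by auto
next
  assume a: "x \<in> alt_grp n \<and> y \<in> alt_grp n \<and> hdist x y = 3"
  then have px: "x permutes {..<n}" and py: "y permutes {..<n}" and ex: "evenperm x" and ey: "evenperm y"
    unfolding alt_grp_def by auto
  define t where "t = y \<circ> inv x"
  have bx: "bij x" using px permutes_bij by blast
  have yt: "y = t \<circ> x" unfolding t_def using bx by (simp add: comp_assoc bij_is_inj inv_o_cancel)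
  have pt: "t permutes {..<n}" unfolding t_def using px py by (simp add: permutes_compose permutes_inv)
  have "card {j. t j \<noteq> j} = 3" using hd_left[OF bx, of t] yt a hd_sym by metis
  then obtain a b c where abc: "distinct [a,b,c]" "t = c3 a b c" "{i. t i \<noteq> i} = {a,b,c}"
    using support3[OF pt] by blast
  have mv: "t u \<noteq> u \<Longrightarrow> u < n" for u using permutes_not_in[OF pt] by (metis lessThan_iff)
  have "a < n" "b < n" "c < n" using abc(3) mv by blast+
  then have "t \<in> three_cycles n" using c3_S abc by simp
  then show "cag_adj n x y" unfolding cag_adj_def using a yt by blast
qed



abbreviation (input) I :: "bool \<Rightarrow> nat" where "I b \<equiv> (if b then 1 else 0)"

lemma card_filter_sum: "finite P \<Longrightarrow> card {p\<in>P. Q p} = (\<Sum>p\<in>P. I (Q p))"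
  by (simp add: sum.inter_filter[symmetric])

lemma hd_split:
  assumes "finite P" "\<forall>i. i \<notin> P \<longrightarrow> w i = i" "finite {i. g i \<noteq> i}"
  shows "hdist g w = (\<Sum>p\<in>P. I (g p \<noteq> w p)) + card {i. i \<notin> P \<and> g i \<noteq> i}"
proof -
  have "{i. g i \<noteq> w i} = {p\<in>P. g p \<noteq> w p} \<union> {i. i \<notin> P \<and> g i \<noteq> i}"
    using assms(2) by auto
  moreover have "finite {i. i \<notin> P \<and> g i \<noteq> i}" using assms(3) by (rule finite_subset[rotated]) auto
  moreover have "card ({p\<in>P. g p \<noteq> w p} \<union> {i. i \<notin> P \<and> g i \<noteq> i}) = card {p\<in>P. g p \<noteq> w p} + card {i. i \<notin> P \<and> g i \<noteq> i}"
    by (rule card_Un_disjoint) (use assms(1) calculation(2) in auto)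
  ultimately have "hdist g w = card {p\<in>P. g p \<noteq> w p} + card {i. i \<notin> P \<and> g i \<noteq> i}"
    unfolding hdist_def by simp
  then show ?thesis using card_filter_sum[OF assms(1)] by simp
qed

lemma hd_explicit:
  assumes "finite P" "\<forall>i. i \<notin> P \<longrightarrow> w i = i" "\<forall>i. i \<notin> P \<longrightarrow> z i = i"
  shows "hdist z w = (\<Sum>p\<in>P. I (z p \<noteq> w p))"
proof -
  have "{i. z i \<noteq> i} \<subseteq> P" using assms(3) by auto
  then have "finite {i. z i \<noteq> i}" using assms(1) finite_subset by blast
  moreover have "{i. i \<notin> P \<and> z i \<noteq> i} = {}" using assms(3) by auto
  ultimately show ?thesis using hd_split[OF assms(1,2)] by simp
qed

lemma sum_list_const: "\<forall>w\<in>set W. f w = c \<Longrightarrow> (\<Sum>w\<leftarrow>W. f w) = c * length W"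
  by (induction W) auto

lemma sum_list_swap: "(\<Sum>w\<leftarrow>W. \<Sum>p\<in>P. f w p) = (\<Sum>p\<in>P. \<Sum>w\<leftarrow>W. f w p)"
  by (induction W) (auto simp: sum.distrib)

lemma pin:
  fixes g :: "nat \<Rightarrow> nat" and W :: "(nat\<Rightarrow>nat) list" and P :: "nat set" and m :: "nat \<Rightarrow> nat"
  assumes fP: "finite P" and fg: "finite {i. g i \<noteq> i}" and W: "W \<noteq> []"
    and wit: "\<forall>w\<in>set W. (\<forall>i. i\<notin>P \<longrightarrow> w i = i) \<and> hdist g w = 3"
    and low: "\<forall>p\<in>P. m p \<le> (\<Sum>w\<leftarrow>W. I (g p \<noteq> w p))"
    and sm: "sum m P = 3 * length W"
  shows "(\<forall>i. i \<notin> P \<longrightarrow> g i = i) \<and> (\<forall>p\<in>P. (\<Sum>w\<leftarrow>W. I (g p \<noteq> w p)) = m p)"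
proof -
  define k where "k = card {i. i \<notin> P \<and> g i \<noteq> i}"
  define c where "c p = (\<Sum>w\<leftarrow>W. I (g p \<noteq> w p))" for p
  have "(\<Sum>w\<leftarrow>W. hdist g w) = 3 * length W" using wit sum_list_const[of W "hdist g" 3] by auto
  moreover have "(\<Sum>w\<leftarrow>W. hdist g w) = (\<Sum>w\<leftarrow>W. (\<Sum>p\<in>P. I (g p \<noteq> w p)) + k)"
    using hd_split[OF fP _ fg] wit unfolding k_def by (metis (no_types, lifting) map_eq_conv)
  moreover have "(\<Sum>w\<leftarrow>W. (\<Sum>p\<in>P. I (g p \<noteq> w p)) + k) = (\<Sum>p\<in>P. c p) + k * length W"
    unfolding c_def by (simp add: sum_list_addf sum_list_swap sum_list_const)
  ultimately have eq: "(\<Sum>p\<in>P. c p) + k * length W = 3 * length W" by simp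
  have ge: "(\<Sum>p\<in>P. c p) \<ge> sum m P" using low unfolding c_def by (simp add: sum_mono)
  have lW: "length W > 0" using W by simp
  have "k = 0" using eq ge sm lW by (metis add_le_same_cancel1 le0 le_antisym mult_le_cancel2 mult_zero_left)
  then have out: "\<forall>i. i \<notin> P \<longrightarrow> g i = i"
    unfolding k_def using fg by (metis (mono_tags, lifting) card_eq_0_iff empty_iff finite_subset mem_Collect_eq subsetI)
  have cs: "(\<Sum>p\<in>P. c p) = sum m P" using eq sm \<open>k = 0\<close> by simp
  have "\<forall>p\<in>P. c p = m p"
  proof (rule ccontr)
    assume "\<not> (\<forall>p\<in>P. c p = m p)"
    then obtain p where "p \<in> P" "c p \<noteq> m p" by blast
    then have "m p < c p" using low unfolding c_def by force
    then have "sum m P < (\<Sum>p\<in>P. c p)"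
      using sum_strict_mono_ex1[OF fP, of m c] low \<open>p \<in> P\<close> unfolding c_def by blast
    then show False using cs by simp
  qed
  then show ?thesis using out unfolding c_def by simp
qed



definition c5 :: "nat \<Rightarrow> nat \<Rightarrow> nat \<Rightarrow> nat \<Rightarrow> nat \<Rightarrow> nat \<Rightarrow> nat" where
  "c5 a b c d e = (\<lambda>i. if i = a then b else if i = b then c else if i = c then d else if i = d then e else if i = e then a else i)"

lemma c5_eq: "distinct [a,b,c,d,e] \<Longrightarrow> c5 a b c d e = c3 a b c \<circ> c3 c d e"
  by (auto simp: c5_def c3_def fun_eq_iff)

lemma A_comp: "x \<in> alt_grp n \<Longrightarrow> y \<in> alt_grp n \<Longrightarrow> x \<circ> y \<in> alt_grp n"
proof -
  assume "x \<in> alt_grp n" "y \<in> alt_grp n"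
  then have p: "x permutes {..<n}" "y permutes {..<n}" "evenperm x" "evenperm y" unfolding alt_grp_def by auto
  have "permutation x" "permutation y" using p(1,2) permutation_permutes by blast+
  then show ?thesis unfolding alt_grp_def using p by (simp add: permutes_compose evenperm_comp)
qed

lemma A_fin: "x \<in> alt_grp n \<Longrightarrow> finite {i. x i \<noteq> i}"
proof -
  assume "x \<in> alt_grp n"
  then have "x permutes {..<n}" by (rule A_perm)
  then have "{i. x i \<noteq> i} \<subseteq> {..<n}" using permutes_not_in by fastforce
  then show ?thesis by (rule finite_subset) simp
qed

definition fixS :: "nat \<Rightarrow> ((nat \<Rightarrow> nat) \<Rightarrow> (nat \<Rightarrow> nat)) \<Rightarrow> bool" where
  "fixS n h \<longleftrightarrow> cag_aut n h \<and> h id = id \<and> (\<forall>w\<in>three_cycles n. h w = w)"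

lemma aut_A: "cag_aut n h \<Longrightarrow> x \<in> alt_grp n \<Longrightarrow> h x \<in> alt_grp n"
  unfolding cag_aut_def using bij_betwE by blast

lemma aut_inj: "cag_aut n h \<Longrightarrow> x \<in> alt_grp n \<Longrightarrow> y \<in> alt_grp n \<Longrightarrow> h x = h y \<Longrightarrow> x = y"
  unfolding cag_aut_def by (meson bij_betw_imp_inj_on inj_onD)

lemma adj_transfer:
  assumes "cag_aut n h" "z \<in> alt_grp n" "w \<in> alt_grp n" "h w = w" "hdist z w = 3"
  shows "hdist (h z) w = 3"
proof -
  have "cag_adj n z w" using assms adj_iff by blast
  then have "cag_adj n (h z) (h w)" using assms(1-3) unfolding cag_aut_def by blast
  then show ?thesis using assms(4) adj_iff by simp
qed

lemma wit3:
  assumes "fixS n h" "distinct [x,y,u]" "x < n" "y < n" "u < n" "z \<in> alt_grp n" "hdist z (c3 x y u) = 3"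
  shows "hdist (h z) (c3 x y u) = 3"
  using assms adj_transfer[of n h z "c3 x y u"] c3_A c3_S unfolding fixS_def by blast

lemma c3_out: "i \<notin> {x,y,u} \<Longrightarrow> c3 x y u i = i" by (simp add: c3_def)

lemma sum5: "distinct [a,b,c,d,e] \<Longrightarrow> sum f {a,b,c,d,e} = f a + f b + f c + f d + (f e::nat)"
  by simp

lemma hd5:
  assumes "distinct [a,b,c,d,e]" "\<forall>i. i \<notin> {a,b,c,d,e} \<longrightarrow> w i = i" "\<forall>i. i \<notin> {a,b,c,d,e} \<longrightarrow> z i = i"
  shows "hdist z w = I (z a \<noteq> w a) + I (z b \<noteq> w b) + I (z c \<noteq> w c) + I (z d \<noteq> w d) + I (z e \<noteq> w e)"
  using hd_explicit[OF _ assms(2,3)] sum5[OF assms(1)] by simp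

lemma c5_vals: "distinct [a,b,c,d,e] \<Longrightarrow> c5 a b c d e a = b \<and> c5 a b c d e b = c \<and> c5 a b c d e c = d \<and> c5 a b c d e d = e \<and> c5 a b c d e e = a"
  by (auto simp: c5_def)

lemma c3_vals: "distinct [a,b,c] \<Longrightarrow> c3 a b c a = b \<and> c3 a b c b = c \<and> c3 a b c c = a"
  by (auto simp: c3_def)

lemma F5:
  assumes h: "fixS n h" and d: "distinct [a,b,c,d,e]" and lt: "a < n" "b < n" "c < n" "d < n" "e < n"
  shows "h (c5 a b c d e) = c5 a b c d e"
proof -
  define z where "z = c5 a b c d e"
  define g where "g = h z"
  define P where "P = {a,b,c,d,e}"
  have aut: "cag_aut n h" and hid: "h id = id" using h unfolding fixS_def by auto
  have zA: "z \<in> alt_grp n" unfolding z_def using c5_eq[OF d] A_comp c3_A d lt by auto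
  have gA: "g \<in> alt_grp n" unfolding g_def using aut_A[OF aut zA] .
  have zo: "\<forall>i. i \<notin> P \<longrightarrow> z i = i" unfolding z_def c5_def P_def by auto
  have fP: "finite P" unfolding P_def by simp
  let ?W = "[c3 a b c, c3 b c d, c3 c d e, c3 d e a, c3 e a b]"
  have zo5: "\<forall>i. i \<notin> {a,b,c,d,e} \<longrightarrow> z i = i" using zo unfolding P_def .
  have dd: "a \<noteq> b" "a \<noteq> c" "a \<noteq> d" "a \<noteq> e" "b \<noteq> c" "b \<noteq> d" "b \<noteq> e" "c \<noteq> d" "c \<noteq> e" "d \<noteq> e"
           "b \<noteq> a" "c \<noteq> a" "d \<noteq> a" "e \<noteq> a" "c \<noteq> b" "d \<noteq> b" "e \<noteq> b" "d \<noteq> c" "e \<noteq> c" "e \<noteq> d" using d by auto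
  have zv: "z a = b" "z b = c" "z c = d" "z d = e" "z e = a" using c5_vals[OF d] unfolding z_def by auto
  have hz: "hdist z w = 3" if "w \<in> set ?W" for w
  proof -
    have wo: "\<forall>i. i \<notin> {a,b,c,d,e} \<longrightarrow> w i = i" using that by (auto simp: c3_def)
    have "w = c3 a b c \<or> w = c3 b c d \<or> w = c3 c d e \<or> w = c3 d e a \<or> w = c3 e a b" using that by simp
    then show ?thesis unfolding hd5[OF d wo zo5] zv by (elim disjE; simp add: c3_def dd)
  qed
  have wit: "\<forall>w\<in>set ?W. (\<forall>i. i\<notin>P \<longrightarrow> w i = i) \<and> hdist g w = 3"
  proof
    fix w assume w: "w \<in> set ?W"
    have "(\<forall>i. i\<notin>P \<longrightarrow> w i = i)" using w unfolding P_def by (auto simp: c3_def)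
    moreover have "hdist g w = 3" unfolding g_def
      using w hz[OF w] wit3[OF h _ _ _ _ zA] d lt by auto
    ultimately show "(\<forall>i. i\<notin>P \<longrightarrow> w i = i) \<and> hdist g w = 3" ..
  qed
  have low: "\<forall>p\<in>P. (\<lambda>_. 3::nat) p \<le> (\<Sum>w\<leftarrow>?W. I (g p \<noteq> w p))"
    unfolding P_def by (simp add: c3_def dd)
  have sm: "sum (\<lambda>_. 3::nat) P = 3 * length ?W" unfolding P_def using d by simp
  have pn: "(\<forall>i. i \<notin> P \<longrightarrow> g i = i) \<and> (\<forall>p\<in>P. (\<Sum>w\<leftarrow>?W. I (g p \<noteq> w p)) = 3)"
    using pin[OF fP A_fin[OF gA] _ wit low sm] by simp
  have ga: "g a = a \<or> g a = b" "g b = b \<or> g b = c" "g c = c \<or> g c = d" "g d = d \<or> g d = e" "g e = e \<or> g e = a"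
    using pn unfolding P_def by (simp_all add: c3_def dd split: if_splits)
  have inj: "g x = g y \<Longrightarrow> x = y" for x y using A_bij[OF gA] by (meson bij_is_inj injD)
  show ?thesis
  proof (cases "g a = a")
    case True
    then have "g e = e" using ga(5) inj[of e a] dd by auto
    then have "g d = d" using ga(4) inj[of d e] dd by auto
    then have "g c = c" using ga(3) inj[of c d] dd by auto
    then have "g b = b" using ga(2) inj[of b c] dd by auto
    note vals = True \<open>g e = e\<close> \<open>g d = d\<close> \<open>g c = c\<close> this
    have out: "\<forall>i. i \<notin> P \<longrightarrow> g i = i" using pn by (rule conjunct1)
    have "g x = x" for x
    proof (cases "x \<in> P")
      case True
      then have "x = a \<or> x = b \<or> x = c \<or> x = d \<or> x = e" unfolding P_def by simp
      then show ?thesis using vals by auto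
    next
      case False
      then show ?thesis using out by simp
    qed
    then have "g = id" by (simp add: fun_eq_iff)
    then have "h z = h id" using hid g_def by simp
    moreover have "id \<in> alt_grp n" unfolding alt_grp_def by (simp add: permutes_id)
    ultimately have "z = id" using aut_inj[OF aut zA] by blast
    then have False using zv(1) dd(1) by simp
    then show ?thesis ..
  next
    case False
    then have "g a = b" using ga by auto
    then have "g b = c" using ga(2) inj[of b a] dd by auto
    then have "g c = d" using ga(3) inj[of c b] dd by auto
    then have "g d = e" using ga(4) inj[of d c] dd by auto
    then have "g e = a" using ga(5) inj[of e d] dd by auto
    note vals = \<open>g a = b\<close> \<open>g b = c\<close> \<open>g c = d\<close> \<open>g d = e\<close> this
    have out: "\<forall>i. i \<notin> P \<longrightarrow> g i = i" using pn by (rule conjunct1)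
    have "g x = z x" for x
    proof (cases "x \<in> P")
      case True
      then have "x = a \<or> x = b \<or> x = c \<or> x = d \<or> x = e" unfolding P_def by simp
      then show ?thesis using vals zv by auto
    next
      case False
      then show ?thesis using out zo by simp
    qed
    then have "g = z" by (simp add: fun_eq_iff)
    then show ?thesis unfolding g_def z_def .
  qed
qed




lemma c5_A: "distinct [a,b,c,d,e] \<Longrightarrow> a < n \<Longrightarrow> b < n \<Longrightarrow> c < n \<Longrightarrow> d < n \<Longrightarrow> e < n \<Longrightarrow> c5 a b c d e \<in> alt_grp n"
  using c5_eq A_comp c3_A by auto

lemma id_A: "id \<in> alt_grp n" unfolding alt_grp_def by (simp add: permutes_id)

definition d22 :: "nat \<Rightarrow> nat \<Rightarrow> nat \<Rightarrow> nat \<Rightarrow> nat \<Rightarrow> nat" where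
  "d22 a b c d = (\<lambda>i. if i = a then b else if i = b then a else if i = c then d else if i = d then c else i)"

lemma F22:
  assumes h: "fixS n h" and d: "distinct [a,b,c,d,x]" and lt: "a < n" "b < n" "c < n" "d < n" "x < n"
  shows "h (d22 a b c d) = d22 a b c d"
proof -
  define z where "z = d22 a b c d"
  define g where "g = h z"
  define P where "P = {a,b,c,d,x}"
  have aut: "cag_aut n h" and hid: "h id = id" and hS: "\<forall>w\<in>three_cycles n. h w = w" using h unfolding fixS_def by auto
  have dd: "a \<noteq> b" "a \<noteq> c" "a \<noteq> d" "a \<noteq> x" "b \<noteq> c" "b \<noteq> d" "b \<noteq> x" "c \<noteq> d" "c \<noteq> x" "d \<noteq> x"
           "b \<noteq> a" "c \<noteq> a" "d \<noteq> a" "x \<noteq> a" "c \<noteq> b" "d \<noteq> b" "x \<noteq> b" "d \<noteq> c" "x \<noteq> c" "x \<noteq> d" using d by auto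
  have zeq: "z = c3 a b c \<circ> c3 b c d" unfolding z_def d22_def c3_def using dd by (auto simp: fun_eq_iff)
  have zA: "z \<in> alt_grp n" unfolding zeq using A_comp c3_A dd lt by auto
  have gA: "g \<in> alt_grp n" unfolding g_def using aut_A[OF aut zA] .
  have zo: "\<forall>i. i \<notin> P \<longrightarrow> z i = i" unfolding z_def d22_def P_def by auto
  have fP: "finite P" unfolding P_def by simp
  let ?W = "[c3 b c d, c3 a b c, c3 a b d, c5 a c d x b, c5 a d c x b, c5 a x d c b]"
  have zo5: "\<forall>i. i \<notin> {a,b,c,d,x} \<longrightarrow> z i = i" using zo unfolding P_def .
  have zv: "z a = b" "z b = a" "z c = d" "z d = c" "z x = x" unfolding z_def d22_def using dd by auto
  have wA: "w \<in> alt_grp n \<and> h w = w" if "w \<in> set ?W" for w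
  proof -
    have "w = c3 b c d \<or> w = c3 a b c \<or> w = c3 a b d \<or> w = c5 a c d x b \<or> w = c5 a d c x b \<or> w = c5 a x d c b"
      using that by simp
    then show ?thesis
    proof (elim disjE)
      assume "w = c3 b c d" then show ?thesis using c3_A c3_S hS dd lt by auto
    next
      assume "w = c3 a b c" then show ?thesis using c3_A c3_S hS dd lt by auto
    next
      assume "w = c3 a b d" then show ?thesis using c3_A c3_S hS dd lt by auto
    next
      assume "w = c5 a c d x b" then show ?thesis using c5_A F5[OF h] dd lt by auto
    next
      assume "w = c5 a d c x b" then show ?thesis using c5_A F5[OF h] dd lt by auto
    next
      assume "w = c5 a x d c b" then show ?thesis using c5_A F5[OF h] dd lt by auto
    qed
  qed
  have hz: "hdist z w = 3" if "w \<in> set ?W" for w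
  proof -
    have wo: "\<forall>i. i \<notin> {a,b,c,d,x} \<longrightarrow> w i = i" using that by (auto simp: c3_def c5_def)
    have "w = c3 b c d \<or> w = c3 a b c \<or> w = c3 a b d \<or> w = c5 a c d x b \<or> w = c5 a d c x b \<or> w = c5 a x d c b"
      using that by simp
    then show ?thesis unfolding hd5[OF d wo zo5] zv by (elim disjE; simp add: c3_def c5_def dd)
  qed
  have wit: "\<forall>w\<in>set ?W. (\<forall>i. i\<notin>P \<longrightarrow> w i = i) \<and> hdist g w = 3"
  proof
    fix w assume w: "w \<in> set ?W"
    have "(\<forall>i. i\<notin>P \<longrightarrow> w i = i)" using w unfolding P_def by (auto simp: c3_def c5_def)
    moreover have "hdist g w = 3" unfolding g_def
      using adj_transfer[OF aut zA _ _ hz[OF w]] wA[OF w] by blast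
    ultimately show "(\<forall>i. i\<notin>P \<longrightarrow> w i = i) \<and> hdist g w = 3" ..
  qed
  define m where "m p = (if p = b \<or> p = x then 3 else (4::nat))" for p
  have low: "\<forall>p\<in>P. m p \<le> (\<Sum>w\<leftarrow>?W. I (g p \<noteq> w p))"
    unfolding P_def m_def by (simp add: c3_def c5_def dd)
  have sm: "sum m P = 3 * length ?W" unfolding P_def m_def using dd by simp
  have pn: "(\<forall>i. i \<notin> P \<longrightarrow> g i = i) \<and> (\<forall>p\<in>P. (\<Sum>w\<leftarrow>?W. I (g p \<noteq> w p)) = m p)"
    using pin[OF fP A_fin[OF gA] _ wit low sm] by simp
  have gv: "g a = b" "g b = a" "g c = d" "g d = c" "g x = x"
    using pn unfolding P_def m_def by (simp_all add: c3_def c5_def dd split: if_splits)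
  have out: "\<forall>i. i \<notin> P \<longrightarrow> g i = i" using pn by (rule conjunct1)
  have "g y = z y" for y
  proof (cases "y \<in> P")
    case True
    then have "y = a \<or> y = b \<or> y = c \<or> y = d \<or> y = x" unfolding P_def by simp
    then show ?thesis using gv zv by auto
  next
    case False
    then show ?thesis using out zo by simp
  qed
  then have "g = z" by (simp add: fun_eq_iff)
  then show ?thesis unfolding g_def z_def .
qed


lemma hd6:
  assumes "distinct [a,b,c,d,e,f]" "\<forall>i. i \<notin> {a,b,c,d,e,f} \<longrightarrow> w i = i" "\<forall>i. i \<notin> {a,b,c,d,e,f} \<longrightarrow> z i = i"
  shows "hdist z w = I (z a \<noteq> w a) + I (z b \<noteq> w b) + I (z c \<noteq> w c) + I (z d \<noteq> w d) + I (z e \<noteq> w e) + I (z f \<noteq> w f)"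
  using hd_explicit[OF _ assms(2,3)] assms(1) by simp

lemma F33:
  assumes h: "fixS n h" and d: "distinct [a,b,c,d,e,f]" and lt: "a < n" "b < n" "c < n" "d < n" "e < n" "f < n"
  shows "h (c3 a b c \<circ> c3 d e f) = c3 a b c \<circ> c3 d e f"
proof -
  define z where "z = c3 a b c \<circ> c3 d e f"
  define g where "g = h z"
  define P where "P = {a,b,c,d,e,f}"
  have aut: "cag_aut n h" and hid: "h id = id" and hS: "\<forall>w\<in>three_cycles n. h w = w" using h unfolding fixS_def by auto
  have dd: "a \<noteq> b" "a \<noteq> c" "a \<noteq> d" "a \<noteq> e" "a \<noteq> f" "b \<noteq> c" "b \<noteq> d" "b \<noteq> e" "b \<noteq> f"
     "c \<noteq> d" "c \<noteq> e" "c \<noteq> f" "d \<noteq> e" "d \<noteq> f" "e \<noteq> f"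
     "b \<noteq> a" "c \<noteq> a" "d \<noteq> a" "e \<noteq> a" "f \<noteq> a" "c \<noteq> b" "d \<noteq> b" "e \<noteq> b" "f \<noteq> b"
     "d \<noteq> c" "e \<noteq> c" "f \<noteq> c" "e \<noteq> d" "f \<noteq> d" "f \<noteq> e" using d by auto
  have zA: "z \<in> alt_grp n" unfolding z_def using A_comp c3_A dd lt by auto
  have gA: "g \<in> alt_grp n" unfolding g_def using aut_A[OF aut zA] .
  have zo: "\<forall>i. i \<notin> P \<longrightarrow> z i = i" unfolding z_def c3_def P_def by auto
  have fP: "finite P" unfolding P_def by simp
  let ?W = "[c3 a b c, c3 d e f]"
  have zo6: "\<forall>i. i \<notin> {a,b,c,d,e,f} \<longrightarrow> z i = i" using zo unfolding P_def .
  have zv: "z a = b" "z b = c" "z c = a" "z d = e" "z e = f" "z f = d" unfolding z_def c3_def using dd by auto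
  have wA: "w \<in> alt_grp n \<and> h w = w" if "w \<in> set ?W" for w
    using that c3_A c3_S hS dd lt by auto
  have hz: "hdist z w = 3" if "w \<in> set ?W" for w
  proof -
    have wo: "\<forall>i. i \<notin> {a,b,c,d,e,f} \<longrightarrow> w i = i" using that by (auto simp: c3_def)
    have "w = c3 a b c \<or> w = c3 d e f" using that by simp
    then show ?thesis unfolding hd6[OF d wo zo6] zv by (elim disjE; simp add: c3_def dd)
  qed
  have wit: "\<forall>w\<in>set ?W. (\<forall>i. i\<notin>P \<longrightarrow> w i = i) \<and> hdist g w = 3"
  proof
    fix w assume w: "w \<in> set ?W"
    have "(\<forall>i. i\<notin>P \<longrightarrow> w i = i)" using w unfolding P_def by (auto simp: c3_def)
    moreover have "hdist g w = 3" unfolding g_def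
      using adj_transfer[OF aut zA _ _ hz[OF w]] wA[OF w] by blast
    ultimately show "(\<forall>i. i\<notin>P \<longrightarrow> w i = i) \<and> hdist g w = 3" ..
  qed
  have low: "\<forall>p\<in>P. (\<lambda>_. 1::nat) p \<le> (\<Sum>w\<leftarrow>?W. I (g p \<noteq> w p))"
    unfolding P_def by (simp add: c3_def dd)
  have sm: "sum (\<lambda>_. 1::nat) P = 3 * length ?W" unfolding P_def using dd by simp
  have pn: "(\<forall>i. i \<notin> P \<longrightarrow> g i = i) \<and> (\<forall>p\<in>P. (\<Sum>w\<leftarrow>?W. I (g p \<noteq> w p)) = 1)"
    using pin[OF fP A_fin[OF gA] _ wit low sm] by simp
  have ga: "g a = a \<or> g a = b" "g b = b \<or> g b = c" "g c = c \<or> g c = a"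
      "g d = d \<or> g d = e" "g e = e \<or> g e = f" "g f = f \<or> g f = d"
    using pn unfolding P_def by (simp_all add: c3_def dd split: if_splits)
  have inj: "g x = g y \<Longrightarrow> x = y" for x y using A_bij[OF gA] by (meson bij_is_inj injD)
  have out: "\<forall>i. i \<notin> P \<longrightarrow> g i = i" using pn by (rule conjunct1)
  have o1: "(g a = a \<and> g b = b \<and> g c = c) \<or> (g a = b \<and> g b = c \<and> g c = a)"
  proof (cases "g a = a")
    case True
    then have "g c = c" using ga(3) inj[of c a] dd by auto
    then have "g b = b" using ga(2) inj[of b c] dd by auto
    then show ?thesis using True \<open>g c = c\<close> by simp
  next
    case False
    then have "g a = b" using ga by auto
    then have "g b = c" using ga(2) inj[of b a] dd by auto
    then have "g c = a" using ga(3) inj[of c b] dd by auto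
    then show ?thesis using \<open>g a = b\<close> \<open>g b = c\<close> by simp
  qed
  have o2: "(g d = d \<and> g e = e \<and> g f = f) \<or> (g d = e \<and> g e = f \<and> g f = d)"
  proof (cases "g d = d")
    case True
    then have "g f = f" using ga(6) inj[of f d] dd by auto
    then have "g e = e" using ga(5) inj[of e f] dd by auto
    then show ?thesis using True \<open>g f = f\<close> by simp
  next
    case False
    then have "g d = e" using ga by auto
    then have "g e = f" using ga(5) inj[of e d] dd by auto
    then have "g f = d" using ga(6) inj[of f e] dd by auto
    then show ?thesis using \<open>g d = e\<close> \<open>g e = f\<close> by simp
  qed
  have Pc: "y \<in> P \<Longrightarrow> y = a \<or> y = b \<or> y = c \<or> y = d \<or> y = e \<or> y = f" for y unfolding P_def by simp
  have zd: "z d \<noteq> d" "z a \<noteq> a" using zv dd by auto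
  show ?thesis
  proof -
    have c1: False if "g a = a" "g b = b" "g c = c" "g d = d" "g e = e" "g f = f"
    proof -
      have "g y = id y" for y using that out Pc by (cases "y \<in> P") auto
      then have "h z = h id" using hid g_def by (simp add: fun_eq_iff)
      then have "z = id" using aut_inj[OF aut zA id_A] by blast
      then show False using zd by simp
    qed
    have c2: False if "g a = b" "g b = c" "g c = a" "g d = d" "g e = e" "g f = f"
    proof -
      have "g y = c3 a b c y" for y using that out Pc dd by (cases "y \<in> P") (auto simp: c3_def P_def)
      then have gc: "g = c3 a b c" by (simp add: fun_eq_iff)
      have cA: "c3 a b c \<in> alt_grp n" "h (c3 a b c) = c3 a b c" using wA by auto
      have "h z = h (c3 a b c)" using gc cA g_def by simp
      then have "z = c3 a b c" using aut_inj[OF aut zA cA(1)] by blast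
      moreover have "c3 a b c d = d" by (simp add: c3_def dd)
      ultimately show False using zv(4) dd by simp
    qed
    have c3: False if "g a = a" "g b = b" "g c = c" "g d = e" "g e = f" "g f = d"
    proof -
      have "g y = c3 d e f y" for y using that out Pc dd by (cases "y \<in> P") (auto simp: c3_def P_def)
      then have gc: "g = c3 d e f" by (simp add: fun_eq_iff)
      have cA: "c3 d e f \<in> alt_grp n" "h (c3 d e f) = c3 d e f" using wA by auto
      have "h z = h (c3 d e f)" using gc cA g_def by simp
      then have "z = c3 d e f" using aut_inj[OF aut zA cA(1)] by blast
      moreover have "c3 d e f a = a" by (simp add: c3_def dd)
      ultimately show False using zv(1) dd by simp
    qed
    have "g a = b \<and> g b = c \<and> g c = a \<and> g d = e \<and> g e = f \<and> g f = d" using o1 o2 c1 c2 c3 by blast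
    then have gv: "g a = b" "g b = c" "g c = a" "g d = e" "g e = f" "g f = d" by auto
    have "g y = z y" for y
    proof (cases "y \<in> P")
      case True
      then have "y = a \<or> y = b \<or> y = c \<or> y = d \<or> y = e \<or> y = f" by (rule Pc)
      then show ?thesis using gv zv by (elim disjE) simp_all
    next
      case False
      then show ?thesis using out zo by simp
    qed
    then show ?thesis unfolding g_def z_def by (simp add: fun_eq_iff)
  qed
qed




lemma c3_rot: "distinct [a,b,c] \<Longrightarrow> c3 a b c = c3 b c a"
  by (auto simp: c3_def fun_eq_iff)

lemma extra: fixes n :: nat assumes "5 \<le> n" shows "\<exists>x<n. x \<notin> {p,q,r,s}"
proof (rule ccontr)
  assume a: "\<not> (\<exists>x<n. x \<notin> {p,q,r,s})"
  have "{..<n} \<subseteq> {p,q,r,s}" using a by blast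
  then have "card {..<n} \<le> card {p,q,r,s}" by (rule card_mono[rotated]) simp
  moreover have "card {p,q,r,s} \<le> 4" by (simp add: card_insert_if)
  ultimately show False using assms by simp
qed

lemma G:
  assumes h: "fixS n h" and n: "5 \<le> n" and d1: "distinct [a,b,c]" and d2: "distinct [a,e,f]"
    and lt: "a < n" "b < n" "c < n" "e < n" "f < n"
  shows "h (c3 a b c \<circ> c3 a e f) = c3 a b c \<circ> c3 a e f"
proof -
  have hS: "\<forall>w\<in>three_cycles n. h w = w" and hid: "h id = id" using h unfolding fixS_def by auto
  have fS: "distinct [p,q,r] \<Longrightarrow> p < n \<Longrightarrow> q < n \<Longrightarrow> r < n \<Longrightarrow> h (c3 p q r) = c3 p q r" for p q r
    using hS c3_S by blast
  consider (1) "e = b" "f = c" | (2) "e = c" "f = b" | (3) "e = b" "f \<noteq> c" | (4) "e = c" "f \<noteq> b"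
    | (5) "e \<noteq> b" "e \<noteq> c" "f = b" | (6) "e \<noteq> b" "e \<noteq> c" "f = c" | (7) "e \<noteq> b" "e \<noteq> c" "f \<noteq> b" "f \<noteq> c"
    by blast
  then show ?thesis
  proof cases
    case 1
    have "c3 a b c \<circ> c3 a e f = c3 a c b" using 1 d1 by (auto simp: c3_def fun_eq_iff)
    then show ?thesis using fS[of a c b] d1 lt by simp
  next
    case 2
    have "c3 a b c \<circ> c3 a e f = id" using 2 d1 by (auto simp: c3_def fun_eq_iff)
    then show ?thesis using hid by simp
  next
    case 3
    have df: "f \<noteq> a" "f \<noteq> b" "f \<noteq> c" using 3 d2 by auto
    have eq: "c3 a b c \<circ> c3 a e f = d22 a c b f" using 3 d1 df by (auto simp: c3_def d22_def fun_eq_iff)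
    obtain x where x: "x < n" "x \<notin> {a,c,b,f}" using extra[OF n] by blast
    have "distinct [a,c,b,f,x]" using x d1 df by auto
    then show ?thesis unfolding eq using F22[OF h] lt x by blast
  next
    case 4
    have df: "f \<noteq> a" "f \<noteq> b" "f \<noteq> c" using 4 d2 by auto
    have "c3 a b c \<circ> c3 a e f = c3 c f b" using 4 d1 df by (auto simp: c3_def fun_eq_iff)
    then show ?thesis using fS[of c f b] d1 df lt by simp
  next
    case 5
    have de: "e \<noteq> a" "e \<noteq> b" "e \<noteq> c" using 5 d2 by auto
    have "c3 a b c \<circ> c3 a e f = c3 a e c" using 5 d1 de by (auto simp: c3_def fun_eq_iff)
    then show ?thesis using fS[of a e c] d1 de lt by simp
  next
    case 6
    have de: "e \<noteq> a" "e \<noteq> b" "e \<noteq> c" using 6 d2 by auto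
    have eq: "c3 a b c \<circ> c3 a e f = d22 a e b c" using 6 d1 de by (auto simp: c3_def d22_def fun_eq_iff)
    obtain x where x: "x < n" "x \<notin> {a,e,b,c}" using extra[OF n] by blast
    have "distinct [a,e,b,c,x]" using x d1 de by auto
    then show ?thesis unfolding eq using F22[OF h] lt x by blast
  next
    case 7
    have de: "e \<noteq> a" "e \<noteq> b" "e \<noteq> c" "f \<noteq> a" "f \<noteq> b" "f \<noteq> c" "e \<noteq> f" using 7 d2 by auto
    have eq: "c3 a b c \<circ> c3 a e f = c5 a e f b c" using d1 de by (auto simp: c3_def c5_def fun_eq_iff)
    have "distinct [a,e,f,b,c]" using d1 de by auto
    then show ?thesis unfolding eq using F5[OF h] lt by blast
  qed
qed

lemma G':
  assumes h: "fixS n h" and n: "5 \<le> n" and d1: "distinct [a,b,c]" and d2: "distinct [d,e,f]"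
    and lt: "a < n" "b < n" "c < n" "d < n" "e < n" "f < n" and dm: "d \<in> {a,b,c}"
  shows "h (c3 a b c \<circ> c3 d e f) = c3 a b c \<circ> c3 d e f"
proof -
  have "d = a \<or> d = b \<or> d = c" using dm by simp
  then show ?thesis
  proof (elim disjE)
    assume "d = a" then show ?thesis using G[OF h n d1 _ lt(1-3)] d2 lt by simp
  next
    assume da: "d = b"
    have "c3 a b c = c3 b c a" using c3_rot[OF d1] .
    moreover have "distinct [b,c,a]" using d1 by auto
    ultimately show ?thesis using G[OF h n, of b c a e f] d2 lt da by simp
  next
    assume da: "d = c"
    have "c3 a b c = c3 c a b" using c3_rot[OF d1] c3_rot[of b c a] d1 by simp
    moreover have "distinct [c,a,b]" using d1 by auto
    ultimately show ?thesis using G[OF h n, of c a b e f] d2 lt da by simp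
  qed
qed

lemma LL:
  assumes h: "fixS n h" and n: "5 \<le> n" and u: "u \<in> three_cycles n" and t: "t \<in> three_cycles n"
  shows "h (u \<circ> t) = u \<circ> t"
proof -
  obtain a b c where abc: "distinct [a,b,c]" "a < n" "b < n" "c < n" "u = c3 a b c" using S_c3[OF u] by blast
  obtain d e f where def: "distinct [d,e,f]" "d < n" "e < n" "f < n" "t = c3 d e f" using S_c3[OF t] by blast
  have r1: "c3 d e f = c3 e f d" using c3_rot[OF def(1)] .
  have r2: "c3 d e f = c3 f d e" using c3_rot[OF def(1)] c3_rot[of e f d] def(1) by simp
  have d2: "distinct [e,f,d]" "distinct [f,d,e]" using def(1) by auto
  show ?thesis
  proof (cases "d \<in> {a,b,c}")
    case True
    then show ?thesis using G'[OF h n abc(1) def(1) abc(2-4) def(2-4)] abc(5) def(5) by simp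
  next
    case F1: False
    show ?thesis
    proof (cases "e \<in> {a,b,c}")
      case True
      then show ?thesis using G'[OF h n abc(1) d2(1) abc(2-4) def(3,4,2)] abc(5) def(5) r1 by simp
    next
      case F2: False
      show ?thesis
      proof (cases "f \<in> {a,b,c}")
        case True
        then show ?thesis using G'[OF h n abc(1) d2(2) abc(2-4) def(4,2,3)] abc(5) def(5) r2 by simp
      next
        case False
        then have "distinct [a,b,c,d,e,f]" using F1 F2 abc(1) def(1) by auto
        then show ?thesis using F33[OF h] abc def by simp
      qed
    qed
  qed
qed




inductive_set gen :: "nat \<Rightarrow> (nat \<Rightarrow> nat) set" for n where
  gid: "id \<in> gen n"
| gstep: "x \<in> gen n \<Longrightarrow> t \<in> three_cycles n \<Longrightarrow> t \<circ> x \<in> gen n"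

lemma gen_c3: "x \<in> gen n \<Longrightarrow> distinct [a,b,c] \<Longrightarrow> a < n \<Longrightarrow> b < n \<Longrightarrow> c < n \<Longrightarrow> c3 a b c \<circ> x \<in> gen n"
  using gstep c3_S by blast

lemma TT1:
  assumes "x \<in> gen n" "a \<noteq> b" "a \<noteq> c" "b \<noteq> c" "a < n" "b < n" "c < n"
  shows "transpose a b \<circ> transpose a c \<circ> x \<in> gen n"
proof -
  have "transpose a b \<circ> transpose a c = c3 a c b"
    using assms(2-4) by (auto simp: c3_def Transposition.transpose_def fun_eq_iff)
  then show ?thesis using gen_c3[OF assms(1), of a c b] assms by simp
qed

lemma TT:
  assumes x: "x \<in> gen n" and ab: "a \<noteq> b" "c \<noteq> d" and lt: "a < n" "b < n" "c < n" "d < n"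
  shows "transpose c d \<circ> transpose a b \<circ> x \<in> gen n"
proof -
  have sw: "transpose p q = transpose q p" for p q :: nat by (rule transpose_commute)
  consider (eq) "{c,d} = {a,b}" | (ca) "c = a" "d \<noteq> b" | (cb) "c = b" "d \<noteq> a" | (da) "d = a" "c \<noteq> b" | (db) "d = b" "c \<noteq> a"
    | (dis) "c \<notin> {a,b}" "d \<notin> {a,b}" by blast
  then show ?thesis
  proof cases
    case eq
    then have "transpose c d = transpose a b" using ab sw by (metis doubleton_eq_iff)
    then show ?thesis using x by (simp add: comp_assoc[symmetric])
  next
    case ca then show ?thesis using TT1[OF x, of a d b] ab lt by simp
  next
    case cb then show ?thesis using TT1[OF x, of b d a] ab lt sw by simp
  next
    case da then show ?thesis using TT1[OF x, of a c b] ab lt sw by simp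
  next
    case db then show ?thesis using TT1[OF x, of b c a] ab lt sw by (metis)
  next
    case dis
    have eq: "transpose c d \<circ> transpose a b = c3 c d a \<circ> c3 d a b"
      using dis ab by (auto simp: c3_def Transposition.transpose_def fun_eq_iff)
    have "c3 d a b \<circ> x \<in> gen n" using gen_c3[OF x, of d a b] dis ab lt by simp
    then have "c3 c d a \<circ> (c3 d a b \<circ> x) \<in> gen n" using gen_c3[of "c3 d a b \<circ> x" n c d a] dis ab lt by simp
    then show ?thesis unfolding eq by (simp add: comp_assoc)
  qed
qed

lemma A_gen:
  assumes n: "5 \<le> n" and p: "p \<in> alt_grp n"
  shows "p \<in> gen n"
proof -
  have pp: "p permutes {..<n}" and ep: "evenperm p" using p unfolding alt_grp_def by auto
  have "(evenperm p \<longrightarrow> p \<in> gen n) \<and> (\<not> evenperm p \<longrightarrow> transpose 0 1 \<circ> p \<in> gen n)"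
    using pp finite_lessThan[of n]
  proof (induction rule: permutes_induct)
    case id
    then show ?case using gid by (simp add: id_def)
  next
    case (swap a b p)
    have perm: "permutation p" using swap.hyps(4) permutation_permutes by blast
    have ev: "evenperm (transpose a b \<circ> p) \<longleftrightarrow> \<not> evenperm p"
      using evenperm_comp[OF permutation_swap_id perm, of a b] evenperm_swap[of a b] swap.hyps(3) by simp
    have l: "a < n" "b < n" using swap.hyps(1,2) by auto
    have n01: "(0::nat) \<noteq> 1" "(0::nat) < n" "(1::nat) < n" using n by auto
    show ?case
    proof (cases "evenperm p")
      case True
      then have "p \<in> gen n" using swap.IH by blast
      then have "transpose 0 1 \<circ> transpose a b \<circ> p \<in> gen n" using TT[of p n a b 0 1] swap.hyps(3) l n01 by simp
      then have "transpose 0 1 \<circ> (transpose a b \<circ> p) \<in> gen n" by (simp only: comp_assoc)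
      moreover have "\<not> evenperm (transpose a b \<circ> p)" using ev True by simp
      ultimately show ?thesis by blast
    next
      case False
      then have g: "transpose 0 1 \<circ> p \<in> gen n" using swap.IH by blast
      have "transpose a b \<circ> transpose 0 1 \<circ> (transpose 0 1 \<circ> p) \<in> gen n"
        using TT[OF g, of 0 1 a b] swap.hyps(3) l n01 by simp
      moreover have "transpose a b \<circ> transpose 0 1 \<circ> (transpose 0 1 \<circ> p) = transpose a b \<circ> p"
        by (simp add: comp_assoc[symmetric] fun_eq_iff)
      ultimately have "transpose a b \<circ> p \<in> gen n" by simp
      moreover have "evenperm (transpose a b \<circ> p)" using ev False by simp
      ultimately show ?thesis by blast
    qed
  qed
  then show ?thesis using ep by simp
qed


lemma gen_A: "x \<in> gen n \<Longrightarrow> x \<in> alt_grp n"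
proof (induction rule: gen.induct)
  case gid
  then show ?case by (rule id_A)
next
  case (gstep x t)
  then show ?case using A_comp S_A by blast
qed

lemma inv_A: assumes "g \<in> alt_grp n" shows "inv g \<in> alt_grp n"
proof -
  have p: "g permutes {..<n}" "evenperm g" using assms unfolding alt_grp_def by auto
  have "permutation g" using p(1) permutation_permutes by blast
  then show ?thesis unfolding alt_grp_def using p permutes_inv evenperm_inv by auto
qed

lemma cancel1: "g \<in> alt_grp n \<Longrightarrow> x \<circ> g \<circ> inv g = x"
  using A_perm permutes_inv_o(1) by (metis comp_assoc comp_id)

lemma cancel2: "g \<in> alt_grp n \<Longrightarrow> x \<circ> inv g \<circ> g = x"
  using A_perm permutes_inv_o(2) by (metis comp_assoc comp_id)

lemma adj_R:
  assumes g: "g \<in> alt_grp n" and x: "x \<in> alt_grp n" and y: "y \<in> alt_grp n"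
  shows "cag_adj n x y \<longleftrightarrow> cag_adj n (x \<circ> g) (y \<circ> g)"
proof -
  have xg: "x \<circ> g \<in> alt_grp n" "y \<circ> g \<in> alt_grp n" using A_comp g x y by auto
  have c: "u \<circ> g = v \<circ> g \<longleftrightarrow> u = v" for u v
    using cancel1[OF g, of u] cancel1[OF g, of v] by metis
  have "(y = t \<circ> x \<or> x = t \<circ> y) \<longleftrightarrow> (y \<circ> g = t \<circ> (x \<circ> g) \<or> x \<circ> g = t \<circ> (y \<circ> g))" for t
    using c[of y "t \<circ> x"] c[of x "t \<circ> y"] by (simp add: comp_assoc)
  then show ?thesis unfolding cag_adj_def using x y xg by auto
qed

lemma R_bij: assumes g: "g \<in> alt_grp n" shows "bij_betw (\<lambda>x. x \<circ> g) (alt_grp n) (alt_grp n)"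
proof (rule bij_betw_byWitness[where f'="\<lambda>x. x \<circ> inv g"])
  show "\<forall>a\<in>alt_grp n. a \<circ> g \<circ> inv g = a" using cancel1[OF g] by blast
  show "\<forall>a\<in>alt_grp n. a \<circ> inv g \<circ> g = a" using cancel2[OF g] by blast
  show "(\<lambda>x. x \<circ> g) ` alt_grp n \<subseteq> alt_grp n" using A_comp g by blast
  show "(\<lambda>x. x \<circ> inv g) ` alt_grp n \<subseteq> alt_grp n" using A_comp inv_A[OF g] by blast
qed

lemma aut_R:
  assumes h: "cag_aut n h" and g: "g \<in> alt_grp n"
  shows "cag_aut n (\<lambda>x. h (x \<circ> g) \<circ> inv g)"
proof -
  have hb: "bij_betw h (alt_grp n) (alt_grp n)" using h unfolding cag_aut_def by blast
  have "bij_betw ((\<lambda>x. x \<circ> inv g) \<circ> h \<circ> (\<lambda>x. x \<circ> g)) (alt_grp n) (alt_grp n)"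
    using bij_betw_trans[OF bij_betw_trans[OF R_bij[OF g] hb] R_bij[OF inv_A[OF g]]] by (simp add: comp_assoc)
  moreover have "((\<lambda>x. x \<circ> inv g) \<circ> h \<circ> (\<lambda>x. x \<circ> g)) = (\<lambda>x. h (x \<circ> g) \<circ> inv g)" by (simp add: fun_eq_iff)
  ultimately have b: "bij_betw (\<lambda>x. h (x \<circ> g) \<circ> inv g) (alt_grp n) (alt_grp n)" by simp
  have "cag_adj n x y \<longleftrightarrow> cag_adj n (h (x \<circ> g) \<circ> inv g) (h (y \<circ> g) \<circ> inv g)"
    if x: "x \<in> alt_grp n" and y: "y \<in> alt_grp n" for x y
  proof -
    have xg: "x \<circ> g \<in> alt_grp n" "y \<circ> g \<in> alt_grp n" using A_comp g x y by auto
    have hx: "h (x \<circ> g) \<in> alt_grp n" "h (y \<circ> g) \<in> alt_grp n" using aut_A[OF h] xg by auto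
    have "cag_adj n x y \<longleftrightarrow> cag_adj n (x \<circ> g) (y \<circ> g)" using adj_R[OF g x y] .
    also have "\<dots> \<longleftrightarrow> cag_adj n (h (x \<circ> g)) (h (y \<circ> g))" using h xg unfolding cag_aut_def by blast
    also have "\<dots> \<longleftrightarrow> cag_adj n (h (x \<circ> g) \<circ> inv g) (h (y \<circ> g) \<circ> inv g)"
      using adj_R[OF inv_A[OF g] hx] .
    finally show ?thesis .
  qed
  then show ?thesis unfolding cag_aut_def using b by blast
qed

theorem lemma3p2:
  fixes n :: nat and f :: "(nat \<Rightarrow> nat) \<Rightarrow> (nat \<Rightarrow> nat)"
  assumes "n \<ge> 5"
    and "cag_aut n f"
    and "f id = id"
    and "\<forall>v. cag_adj n id v \<longrightarrow> f v = v"
  shows "\<forall>x\<in>alt_grp n. f x = x"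
proof -
  have n: "5 \<le> n" using assms(1) by simp
  have hS: "\<forall>w\<in>three_cycles n. f w = w"
  proof
    fix w assume w: "w \<in> three_cycles n"
    have "cag_adj n id w" unfolding cag_adj_def using w id_A S_A[OF w] by (metis comp_id)
    then show "f w = w" using assms(4) by blast
  qed
  have Q: "f x = x \<and> (\<forall>w\<in>three_cycles n. f (w \<circ> x) = w \<circ> x)" if "x \<in> gen n" for x
    using that
  proof (induction rule: gen.induct)
    case gid
    then show ?case using assms(3) hS by (simp add: id_def[symmetric])
  next
    case (gstep x t)
    have xA: "x \<in> alt_grp n" using gen_A[OF gstep.hyps(1)] .
    have fx: "f x = x" and fw: "\<forall>w\<in>three_cycles n. f (w \<circ> x) = w \<circ> x" using gstep.IH by blast+
    define hg where "hg = (\<lambda>y. f (y \<circ> x) \<circ> inv x)"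
    have fixh: "fixS n hg" unfolding fixS_def
    proof (intro conjI ballI)
      show "cag_aut n hg" unfolding hg_def using aut_R[OF assms(2) xA] .
      show "hg id = id" unfolding hg_def using fx cancel1[OF xA, of id] by simp
      fix w assume w: "w \<in> three_cycles n"
      show "hg w = w" unfolding hg_def using fw w cancel1[OF xA, of w] by simp
    qed
    have "f (w \<circ> (t \<circ> x)) = w \<circ> (t \<circ> x)" if w: "w \<in> three_cycles n" for w
    proof -
      have "hg (w \<circ> t) = w \<circ> t" using LL[OF fixh n w gstep.hyps(2)] .
      then have "f (w \<circ> t \<circ> x) \<circ> inv x = w \<circ> t" unfolding hg_def .
      then have "f (w \<circ> t \<circ> x) \<circ> inv x \<circ> x = w \<circ> t \<circ> x" by (metis comp_assoc)
      moreover have "f (w \<circ> t \<circ> x) \<circ> inv x \<circ> x = f (w \<circ> t \<circ> x)" by (rule cancel2[OF xA])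
      ultimately have "f (w \<circ> t \<circ> x) = w \<circ> t \<circ> x" by simp
      then show ?thesis by (simp add: comp_assoc)
    qed
    then show ?case using fw gstep.hyps(2) by blast
  qed
  show ?thesis using Q A_gen[OF n] by blast
qed


end
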